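(* Let $k\ge2$ and $\alpha>5$ be real. For $i=1,\dots,k-1$ let $a(i),b(i),c(i),d(i)\in\mathbb{C}$ with $|a(i)|=|d(i)|=1$ and $|b(i)|=|c(i)|=\alpha$. Let $x_1,\dots,x_k\in\mathbb{C}$ with $x_1\neq0$ satisfy $$c(1)x_1+d(1)x_2=0,\qquad b(2)x_1+c(2)x_2+d(2)x_3=0,$$ and $a(l)x_{l-2}+b(l)x_{l-1}+c(l)x_l+d(l)x_{l+1}=0$ for $3\le l\le k-1$. Then $|x_{l+1}|\ge(\alpha-2)|x_l|$ for $l=1,2,\dots,k-1$. *)

theory Defs
  imports Complex_Main
begin

end

theory Submission
  imports Defs
begin

lemma step_ineq:
  fixes n0 n1 n2 n3 al :: real
  assumes "al > 5" "n0 \<ge> 0" "n1 \<ge> 0" "n2 \<ge> 0"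
    and "n3 \<ge> al * n2 - al * n1 - n0"
    and "n2 \<ge> (al - 2) * n1" "n1 \<ge> (al - 2) * n0"
  shows "n3 \<ge> (al - 2) * n2"
proof -
  have a: "3 * n1 \<le> n2"
    using assms(6) mult_right_mono[of 3 "al - 2" n1] assms(1,3) by linarith
  have b: "3 * n0 \<le> n1"
    using assms(7) mult_right_mono[of 3 "al - 2" n0] assms(1,2) by linarith
  have "al * n1 = (al - 2) * n1 + 2 * n1" by algebra
  hence "al * n1 \<le> n2 + 2 * n1" using assms(6) by linarith
  moreover have "(al - 2) * n2 = al * n2 - 2 * n2" by algebra
  ultimately show ?thesis using a b assms(2-5) by linarith
qed

lemma norm3:
  fixes p q r s d :: complex
  assumes "p + q + r + d * s = 0" "norm d = 1"
  shows "norm s \<ge> norm r - norm q - norm p"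
proof -
  have "d * s = - (p + q + r)" using assms(1) by (simp add: eq_neg_iff_add_eq_0 algebra_simps)
  hence "norm s = norm (p + q + r)" using assms(2) by (metis norm_minus_cancel norm_mult mult_1)
  moreover have "norm r \<le> norm (p + q + r) + norm q + norm p"
    using norm_triangle_ineq4[of "p+q+r" "p+q"] norm_triangle_ineq[of p q] by simp
  ultimately show ?thesis by linarith
qed

theorem lemma4p1:
  fixes k :: nat and \<alpha> :: real and a b c d x :: "nat \<Rightarrow> complex"
  assumes "k \<ge> 2" and "\<alpha> > 5"
    and "\<And>i. 1 \<le> i \<Longrightarrow> i \<le> k - 1 \<Longrightarrow> norm (a i) = 1 \<and> norm (d i) = 1"
    and "\<And>i. 1 \<le> i \<Longrightarrow> i \<le> k - 1 \<Longrightarrow> norm (b i) = \<alpha> \<and> norm (c i) = \<alpha>"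
    and "x 1 \<noteq> 0"
    and "c 1 * x 1 + d 1 * x 2 = 0"
    and "k \<ge> 3 \<Longrightarrow> b 2 * x 1 + c 2 * x 2 + d 2 * x 3 = 0"
    and "\<And>l. 3 \<le> l \<Longrightarrow> l \<le> k - 1 \<Longrightarrow>
           a l * x (l - 2) + b l * x (l - 1) + c l * x l + d l * x (l + 1) = 0"
  shows "\<forall>l. 1 \<le> l \<and> l \<le> k - 1 \<longrightarrow> norm (x (l + 1)) \<ge> (\<alpha> - 2) * norm (x l)"
proof -
  have n1: "norm (x 2) = \<alpha> * norm (x 1)"
  proof -
    have "d 1 * x 2 = - (c 1 * x 1)" using assms(6) by (simp add: eq_neg_iff_add_eq_0 algebra_simps)
    hence "norm (d 1) * norm (x 2) = norm (c 1 * x 1)" by (metis norm_minus_cancel norm_mult)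
    moreover have "norm (d 1) = 1" using assms(3)[of 1] assms(1) by simp
    ultimately have "norm (x 2) = norm (c 1 * x 1)" by simp
    thus ?thesis using assms(4)[of 1] assms(1) by (simp add: norm_mult)
  qed
  show ?thesis
  proof (intro allI impI)
    fix l assume "1 \<le> l \<and> l \<le> k - 1"
    then show "norm (x (l + 1)) \<ge> (\<alpha> - 2) * norm (x l)"
    proof (induction l rule: less_induct)
      case (less l)
      consider "l = 1" | "l = 2" | "l \<ge> 3" using less.prems by linarith
      then show ?case
      proof cases
        case 1
        have "(\<alpha> - 2) * norm (x 1) = \<alpha> * norm (x 1) - 2 * norm (x 1)" by algebra
        then show ?thesis using n1 1 by (simp del: One_nat_def)
      next
        case 2
        have k3: "k \<ge> 3" using less.prems 2 by linarith
        have "norm (x 3) \<ge> norm (c 2 * x 2) - norm (b 2 * x 1) - norm (0::complex)"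
          using norm3[of 0 "b 2 * x 1" "c 2 * x 2" "d 2" "x 3"] assms(7)[OF k3] assms(3)[of 2] k3
          by simp
        hence "norm (x 3) \<ge> \<alpha> * norm (x 2) - norm (x 2)"
          using assms(4)[of 2] k3 n1 by (simp add: norm_mult)
        moreover have "(\<alpha> - 2) * norm (x 2) \<le> \<alpha> * norm (x 2) - norm (x 2)"
          by (simp add: algebra_simps)
        ultimately show ?thesis using 2 by simp
      next
        case 3
        have h1: "norm (x l) \<ge> (\<alpha> - 2) * norm (x (l - 1))"
        proof -
          have e: "l - 1 < l" "1 \<le> l - 1 \<and> l - 1 \<le> k - 1" using less.prems 3 by auto
          have "l - 1 + 1 = l" using 3 by simp
          then show ?thesis using less.IH[OF e] by simp
        qed
        have h2: "norm (x (l - 1)) \<ge> (\<alpha> - 2) * norm (x (l - 2))"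
        proof -
          have e: "l - 2 < l" "1 \<le> l - 2 \<and> l - 2 \<le> k - 1" using less.prems 3 by auto
          have "l - 2 + 1 = l - 1" using 3 by simp
          then show ?thesis using less.IH[OF e] by simp
        qed
        have "norm (x (l + 1)) \<ge> norm (c l * x l) - norm (b l * x (l - 1)) - norm (a l * x (l - 2))"
          using norm3[of "a l * x (l - 2)" "b l * x (l - 1)" "c l * x l" "d l" "x (l + 1)"]
            assms(8)[of l] assms(3)[of l] 3 less.prems by simp
        hence "norm (x (l + 1)) \<ge> \<alpha> * norm (x l) - \<alpha> * norm (x (l - 1)) - norm (x (l - 2))"
          using assms(3)[of l] assms(4)[of l] 3 less.prems by (simp add: norm_mult)
        then show ?thesis using step_ineq[OF assms(2) _ _ _ _ h1 h2] by simp
      qed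
    qed
  qed
qed

end
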